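(* Let $A$ be a unital $A_\infty$-algebra and $\phi=\sum_{i\ge0}\phi_iv^i$ a negative cyclic cocycle of $A$. Define $\widetilde{\phi_0}(\vec a,\underline v,\vec b)(w):=\phi_0(\vec a,v,\vec b)(w)-\phi_0(\vec b,w,\vec a)(v)$. Then $\widetilde{\phi_0}$ is an $A_\infty$-bimodule map from $A$ to $A^*$ and it satisfies the skew-symmetry and closedness conditions of a strong homotopy inner product.
   Context: $A=(C,\{m_k\})$: $A_\infty$-algebra over a field $\mathbf k$ of characteristic 0 with degree $+1$ maps $m_k:C[1]^{\otimes k}\to C[1]$, $|x|'=|x|-1$, unit $I$. The dual $A^*$ is an $A_\infty$-bimodule via $d^*_{k,l}(x_1,\dots,x_k,v^*,x_{k+1},\dots,x_{k+l})(w)=\pm v^*(m_{k+l+1}(x_{k+1},\dots,x_{k+l},w,x_1,\dots,x_k))$. An $A_\infty$-bimodule map $\phi:A\to A^*$ is a family $\phi_{k,l}:C[1]^{\otimes k}\otimes\underline{C[1]}\otimes C[1]^{\otimes l}\to C^*$ with $\sum\pm\phi(\dots,m_j(\dots),\dots)=\sum\pm d^*(\dots,\phi(\dots),\dots)$ (sum over applying one $m_j$ to consecutive inputs, resp. applying $\phi$ to a consecutive block containing the module entry). Hochschild cochains $C^\bullet(A,A^* )=\bigoplus_n\mathrm{Hom}(\bar C[1]^{\otimes n},C^* )$ ($\bar C=C/\mathbf kI$), $b^*\eta(a_1,\dots,a_n)(a_{n+1})=\sum\pm\eta(\dots,m_k(\dots),\dots)(a_{n+1})+\sum\pm\eta(a_j,\dots,a_p)(m_k(a_{p+1},\dots,a_{n+1},a_1,\dots,a_{j-1}))$;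 $B^*\eta(a_1,\dots,a_n)(a_{n+1})=\sum_{\sigma\in\mathbb Z/(n+1)}\pm\eta(a_{\sigma(1)},\dots,a_{\sigma(n+1)})(I)$ (sum over cyclic rotations). A negative cyclic cocycle is $\phi=\sum_{i\ge0}\phi_iv^i$, $\phi_i\in C^\bullet(A,A^* )$, with $b^*\phi_i=B^*\phi_{i+1}$ for all $i$. Skew-symmetry: $\psi_{k,l}(\vec a,\underline v,\vec b)(w)=-(\pm)\psi_{l,k}(\vec b,\underline w,\vec a)(v)$. Closedness: for any cyclically ordered family $(a_1,\dots,a_{l+1})$ and $i<j<k$, $\psi(\dots,\underline{a_i},\dots)(a_j)\pm\psi(\dots,\underline{a_j},\dots)(a_k)\pm\psi(\dots,\underline{a_k},\dots)(a_i)=0$, where $\psi(\dots,\underline{a_p},\dots)(a_q)$ is $\psi$ applied to the remaining elements in cyclic order with module entry $a_p$, evaluated at $a_q$. All signs are Koszul signs. *)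

theory Defs
  imports Main
begin

text \<open>
C is the graded k-vector space with homogeneous basis indexed by the type 'b,
with (unshifted) degree function deg; the unit I is the basis element u.
A multilinear map C[1]^{tensor n} -> C[1] is given on basis tensors by coefficients:
m xs e is the coefficient of the basis vector e in m_{length xs}(xs).
A map into C^* evaluated at a last argument is a function on basis lists:
eta (a_1,...,a_n,a_{n+1}) stands for eta(a_1,...,a_n)(a_{n+1}).
All Koszul signs use shifted degrees |x|' = deg x - 1 (also for the evaluation slot).
\<close>

definition sgnk :: "int \<Rightarrow> 'k::ring_1" where
  "sgnk n = (if even n then 1 else -1)"

definition sd :: "('b \<Rightarrow> int) \<Rightarrow> 'b \<Rightarrow> int" where
  "sd deg x = deg x - 1"

definition eps :: "('b \<Rightarrow> int) \<Rightarrow> 'b list \<Rightarrow> int" where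
  "eps deg xs = sum_list (map (sd deg) xs)"

definition rot :: "nat \<Rightarrow> 'b list \<Rightarrow> 'b list" where
  "rot j xs = drop j xs @ take j xs"

definition rsign :: "('b \<Rightarrow> int) \<Rightarrow> nat \<Rightarrow> 'b list \<Rightarrow> 'k::ring_1" where
  "rsign deg j xs = sgnk (eps deg (take j xs) * eps deg (drop j xs))"

text \<open>multilinear substitution of m(B) into the slot between pre and post of F\<close>
definition ins :: "('b list \<Rightarrow> 'b \<Rightarrow> 'k::comm_ring_1) \<Rightarrow> ('b list \<Rightarrow> 'k)
    \<Rightarrow> 'b list \<Rightarrow> 'b list \<Rightarrow> 'b list \<Rightarrow> 'k" where
  "ins m F pre B post = (\<Sum>e\<in>{e. m B e \<noteq> 0}. m B e * F (pre @ e # post))"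

text \<open>A-infinity algebra (m_0 = 0, degree +1 maps on C[1], finitely supported outputs)\<close>
definition ainf_alg :: "('b \<Rightarrow> int) \<Rightarrow> ('b list \<Rightarrow> 'b \<Rightarrow> 'k::comm_ring_1) \<Rightarrow> bool" where
  "ainf_alg deg m \<longleftrightarrow>
     (\<forall>xs. finite {e. m xs e \<noteq> 0}) \<and>
     (\<forall>e. m [] e = 0) \<and>
     (\<forall>xs e. m xs e \<noteq> 0 \<longrightarrow> sd deg e = eps deg xs + 1) \<and>
     (\<forall>xs e. (\<Sum>i<length xs. \<Sum>L\<in>{1..length xs - i}.
         sgnk (eps deg (take i xs)) *
         ins m (\<lambda>ys. m ys e) (take i xs) (take L (drop i xs)) (drop (i + L) xs)) = 0)"

definition unital :: "('b \<Rightarrow> int) \<Rightarrow> ('b list \<Rightarrow> 'b \<Rightarrow> 'k::comm_ring_1) \<Rightarrow> 'b \<Rightarrow> bool" where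
  "unital deg m u \<longleftrightarrow>
     deg u = 0 \<and>
     (\<forall>x e. m [u, x] e = (if e = x then 1 else 0)) \<and>
     (\<forall>x e. m [x, u] e = (if e = x then sgnk (deg x) else 0)) \<and>
     (\<forall>xs e. u \<in> set xs \<and> length xs \<noteq> 2 \<longrightarrow> m xs e = 0)"

text \<open>Hochschild differential b^* on C^*(A,A^*), as a function of (a_1..a_n, a_{n+1})\<close>
definition hoch_b :: "('b \<Rightarrow> int) \<Rightarrow> ('b list \<Rightarrow> 'b \<Rightarrow> 'k::comm_ring_1) \<Rightarrow> ('b list \<Rightarrow> 'k)
    \<Rightarrow> 'b list \<Rightarrow> 'k" where
  "hoch_b deg m \<eta> xs =
     (\<Sum>i<length xs. \<Sum>L\<in>{1..length xs - 1 - i}.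
        sgnk (eps deg (take i xs)) *
        ins m \<eta> (take i xs) (take L (drop i xs)) (drop (i + L) xs))
   + (\<Sum>j<length xs. \<Sum>p\<le>length xs - 1 - j.
        rsign deg j xs * sgnk (eps deg (take p (rot j xs))) *
        ins m \<eta> (take p (rot j xs)) (drop p (rot j xs)) [])"

definition conn_B :: "('b \<Rightarrow> int) \<Rightarrow> 'b \<Rightarrow> ('b list \<Rightarrow> 'k::comm_ring_1) \<Rightarrow> 'b list \<Rightarrow> 'k" where
  "conn_B deg u \<eta> xs = (\<Sum>j<length xs. rsign deg j xs * \<eta> (rot j xs @ [u]))"

text \<open>normalized cochains (arguments in \bar C = C / k I) and finitely many arities (direct sum)\<close>
definition normalized :: "'b \<Rightarrow> ('b list \<Rightarrow> 'k::zero) \<Rightarrow> bool" where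
  "normalized u \<eta> \<longleftrightarrow> (\<forall>xs. u \<in> set (butlast xs) \<longrightarrow> \<eta> xs = 0)"

definition fin_arity :: "('b list \<Rightarrow> 'k::zero) \<Rightarrow> bool" where
  "fin_arity \<eta> \<longleftrightarrow> (\<exists>n. \<forall>xs. n < length xs \<longrightarrow> \<eta> xs = 0)"

definition neg_cyclic_cocycle :: "('b \<Rightarrow> int) \<Rightarrow> ('b list \<Rightarrow> 'b \<Rightarrow> 'k::comm_ring_1) \<Rightarrow> 'b
    \<Rightarrow> (nat \<Rightarrow> 'b list \<Rightarrow> 'k) \<Rightarrow> bool" where
  "neg_cyclic_cocycle deg m u \<phi> \<longleftrightarrow>
     (\<forall>i. normalized u (\<phi> i) \<and> fin_arity (\<phi> i)) \<and>
     (\<forall>i xs. xs \<noteq> [] \<and> u \<notin> set (butlast xs) \<longrightarrow>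
        hoch_b deg m (\<phi> i) xs = conn_B deg u (\<phi> (Suc i)) xs)"

text \<open>A bimodule-type map psi: psi k (a_1..a_k, v, b_1..b_l, w) = psi_{k,l}(a,v,b)(w)\<close>

definition phi_tilde :: "('b \<Rightarrow> int) \<Rightarrow> ('b list \<Rightarrow> 'k::comm_ring_1) \<Rightarrow> nat \<Rightarrow> 'b list \<Rightarrow> 'k" where
  "phi_tilde deg \<phi>0 k xs = \<phi>0 xs - rsign deg (Suc k) xs * \<phi>0 (rot (Suc k) xs)"

text \<open>A-infinity bimodule map A -> A^*, with d^*(x',v^*,x'')(w) written out:
  d^*(x',v^*,x'')(w) = - (-1)^{eps(x')(|v^*|'+eps(x'')+|w|') + |v^*|'} v^*(m(x'',w,x'))\<close>
definition bimod_map :: "('b \<Rightarrow> int) \<Rightarrow> ('b list \<Rightarrow> 'b \<Rightarrow> 'k::comm_ring_1)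
    \<Rightarrow> (nat \<Rightarrow> 'b list \<Rightarrow> 'k) \<Rightarrow> bool" where
  "bimod_map deg m \<psi> \<longleftrightarrow>
    (\<forall>k xs. Suc (Suc k) \<le> length xs \<longrightarrow>
      (\<Sum>i<length xs. \<Sum>L\<in>{1..length xs - 1 - i}.
         sgnk (eps deg (take i xs)) *
         ins m (\<psi> (if i \<le> k \<and> k < i + L then i else if i + L \<le> k then k + 1 - L else k))
           (take i xs) (take L (drop i xs)) (drop (i + L) xs))
      = (\<Sum>i\<le>k. \<Sum>L\<in>{k + 1 - i..length xs - 1 - i}.
         - (rsign deg i xs * sgnk (eps deg (take L (drop i xs)))) *
         ins m (\<psi> (k - i)) (take L (drop i xs)) (drop (i + L) xs @ take i xs) []))"

definition skew_sym :: "('b \<Rightarrow> int) \<Rightarrow> (nat \<Rightarrow> 'b list \<Rightarrow> 'k::comm_ring_1) \<Rightarrow> bool" where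
  "skew_sym deg \<psi> \<longleftrightarrow>
    (\<forall>k xs. Suc (Suc k) \<le> length xs \<longrightarrow>
      \<psi> k xs = - (rsign deg (Suc k) xs * \<psi> (length xs - 2 - k) (rot (Suc k) xs)))"

text \<open>psi(..., module entry a_p, ...)(a_q) with the Koszul sign of the rotation of the cyclic family\<close>
definition cterm :: "('b \<Rightarrow> int) \<Rightarrow> (nat \<Rightarrow> 'b list \<Rightarrow> 'k::comm_ring_1) \<Rightarrow> 'b list
    \<Rightarrow> nat \<Rightarrow> nat \<Rightarrow> 'k" where
  "cterm deg \<psi> as p q = rsign deg (Suc q) as *
     \<psi> ((p + length as - Suc q) mod length as) (rot (Suc q) as)"

definition closed_ip :: "('b \<Rightarrow> int) \<Rightarrow> (nat \<Rightarrow> 'b list \<Rightarrow> 'k::comm_ring_1) \<Rightarrow> bool" where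
  "closed_ip deg \<psi> \<longleftrightarrow>
    (\<forall>as i j k. i < j \<and> j < k \<and> k < length as \<longrightarrow>
       cterm deg \<psi> as i j + cterm deg \<psi> as j k + cterm deg \<psi> as k i = 0)"

end

theory Submission
  imports Defs
begin

lemma sgnk_mult: "sgnk a * sgnk b = (sgnk (a+b) :: 'k::ring_1)"
  by (auto simp: sgnk_def)

lemma sgnk_cong: "(even a \<longleftrightarrow> even b) \<Longrightarrow> (sgnk a :: 'k::ring_1) = sgnk b"
  by (auto simp: sgnk_def)

lemma sgnk_neg: "- sgnk a = (sgnk (a+1) :: 'k::ring_1)"
  by (auto simp: sgnk_def)

lemma sgnk_sq: "sgnk a * sgnk a = (1 :: 'k::ring_1)"
  by (auto simp: sgnk_def)

lemma eps_Nil[simp]: "eps deg [] = 0" by (simp add: eps_def)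
lemma eps_Cons[simp]: "eps deg (x # xs) = sd deg x + eps deg xs" by (simp add: eps_def)
lemma eps_append[simp]: "eps deg (xs @ ys) = eps deg xs + eps deg ys" by (simp add: eps_def)

lemma rot_app: "a = length X \<Longrightarrow> rot a (X @ Y) = Y @ X" by (simp add: rot_def)
lemma rsign_app: "a = length X \<Longrightarrow> rsign deg a (X @ Y) = sgnk (eps deg X * eps deg Y)"
  by (simp add: rsign_def)
lemma rot_app2: "a = length X + length Y \<Longrightarrow> rot a (X @ Y @ Z) = Z @ X @ Y"
  by (metis append.assoc length_append rot_app)
lemma rsign_app2: "a = length X + length Y \<Longrightarrow> rsign deg a (X @ Y @ Z) = sgnk ((eps deg X + eps deg Y) * eps deg Z)"
  by (metis append.assoc eps_append length_append rsign_app)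
lemma rot_0[simp]: "rot 0 xs = xs" by (simp add: rot_def)
lemma rsign_0[simp]: "rsign deg 0 xs = 1" by (simp add: rsign_def sgnk_def)

lemma rot_add:
  assumes "a + b \<le> length xs"
  shows "rot b (rot a xs) = rot (a+b) xs \<and> rsign deg a xs * rsign deg b (rot a xs) = (rsign deg (a+b) xs :: 'k::ring_1)"
proof -
  obtain X Y Z where xs: "xs = X @ Y @ Z" "length X = a" "length Y = b"
    using assms by (metis add_leD1 append_take_drop_id drop_drop le_add_diff_inverse length_drop length_take min.absorb2 nat_le_linear add.commute add_diff_cancel_left' diff_le_mono)
  have 1: "rot a xs = (Y@Z) @ X" using xs by (simp add: rot_app)
  have 2: "rot b ((Y @ Z) @ X) = (Z @ X) @ Y" using xs by (simp add: rot_app)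
  have 3: "rot (a+b) xs = Z @ (X @ Y)" using xs by (simp add: rot_app2)
  have s1: "rsign deg a xs = (sgnk (eps deg X * (eps deg Y + eps deg Z)) :: 'k)" using xs by (simp add: rsign_app)
  have s2: "rsign deg b ((Y @ Z) @ X) = (sgnk (eps deg Y * (eps deg Z + eps deg X)) :: 'k)" using xs by (simp add: rsign_app)
  have s3: "rsign deg (a+b) xs = (sgnk ((eps deg X + eps deg Y) * eps deg Z) :: 'k)" using xs
    by (simp add: rsign_app2)
  show ?thesis unfolding 1 2 3 s1 s2 s3 sgnk_mult
    by (simp, rule sgnk_cong, auto simp: even_add even_mult_iff)
qed

lemma rot_add2:
  assumes "a \<le> length xs" "b \<le> length xs" "length xs \<le> a + b"
  shows "rot b (rot a xs) = rot (a+b-length xs) xs \<and> rsign deg a xs * rsign deg b (rot a xs) = (rsign deg (a+b-length xs) xs :: 'k::ring_1)"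
proof -
  define X where "X = take (a+b-length xs) xs"
  define Y where "Y = take (length xs - b) (drop (a+b-length xs) xs)"
  define Z where "Z = drop a xs"
  have e: "(length xs - b) + (a+b-length xs) = a" using assms by arith
  have d: "drop (length xs - b) (drop (a+b-length xs) xs) = Z" unfolding Z_def drop_drop e ..
  have dd: "drop (a+b-length xs) xs = Y @ Z" unfolding Y_def d[symmetric] by (rule append_take_drop_id[symmetric])
  have xs1: "xs = X @ Y @ Z" unfolding X_def dd[symmetric] by simp
  have xs2: "length X = a+b-length xs" unfolding X_def using assms by simp
  have xs3: "length Y = length xs - b" unfolding Y_def using assms by simp
  have xs4: "length Z = length xs - a" unfolding Z_def by simp
  have la: "a = length X + length Y" using xs2 xs3 assms by simp
  have lb: "b = length Z + length X" using xs2 xs4 assms by simp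
  have 1: "rot a xs = Z @ X @ Y" unfolding xs1 using la by (rule rot_app2)
  have 2: "rot b (Z @ X @ Y) = Y @ Z @ X" using lb by (rule rot_app2)
  define c where "c = a+b-length xs"
  have lc: "c = length X" using xs2 c_def by simp
  have 3: "rot c xs = (Y @ Z) @ X" unfolding xs1 using lc by (simp add: rot_app)
  have s1: "rsign deg a xs = (sgnk ((eps deg X + eps deg Y) * eps deg Z) :: 'k)" unfolding xs1 using la by (rule rsign_app2)
  have s2: "rsign deg b (Z @ X @ Y) = (sgnk ((eps deg Z + eps deg X) * eps deg Y) :: 'k)" using lb by (rule rsign_app2)
  have s3: "rsign deg c xs = (sgnk (eps deg X * (eps deg Y + eps deg Z)) :: 'k)" unfolding xs1 using lc
    by (simp add: rsign_app)
  show ?thesis unfolding c_def[symmetric] 1 2 3 s1 s2 s3 sgnk_mult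
    by (simp, rule sgnk_cong, auto simp: even_add even_mult_iff)
qed

lemma rot_len: "rot (length xs) xs = xs" by (simp add: rot_def)
lemma rsign_len: "rsign deg (length xs) xs = 1" by (simp add: rsign_def sgnk_def)
lemma length_rot[simp]: "length (rot a xs) = length xs" by (simp add: rot_def)

lemma skew: "skew_sym deg (phi_tilde deg (\<phi>0 :: 'b list \<Rightarrow> 'k::comm_ring_1))"
  unfolding skew_sym_def
proof (intro allI impI)
  fix k xs assume h: "Suc (Suc k) \<le> length (xs::'b list)"
  let ?n = "length xs"
  have e: "Suc k + Suc (?n - 2 - k) = ?n" using h by arith
  have R: "rot (Suc (?n - 2 - k)) (rot (Suc k) xs) = xs" and S: "rsign deg (Suc k) xs * rsign deg (Suc (?n - 2 - k)) (rot (Suc k) xs) = (1::'k)"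
    using rot_add[of "Suc k" "Suc (?n - 2 - k)" xs deg] e rot_len[of xs] rsign_len[of deg xs] by (metis order.refl)+
  have "- (rsign deg (Suc k) xs * (\<phi>0 (rot (Suc k) xs) - rsign deg (Suc (?n - 2 - k)) (rot (Suc k) xs) * \<phi>0 xs))
     = (rsign deg (Suc k) xs * rsign deg (Suc (?n - 2 - k)) (rot (Suc k) xs)) * \<phi>0 xs - rsign deg (Suc k) xs * \<phi>0 (rot (Suc k) xs)"
    by (simp add: algebra_simps)
  then show "phi_tilde deg \<phi>0 k xs = - (rsign deg (Suc k) xs * phi_tilde deg \<phi>0 (?n - 2 - k) (rot (Suc k) xs))"
    unfolding phi_tilde_def length_rot R S by simp
qed

lemma cterm_eq:
  assumes "p < length as" "q < length as" "p \<noteq> q"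
  shows "cterm deg (phi_tilde deg (\<phi>0 :: 'b list \<Rightarrow> 'k::comm_ring_1)) as p q
     = rsign deg (Suc q) as * \<phi>0 (rot (Suc q) as) - rsign deg (Suc p) as * \<phi>0 (rot (Suc p) as)"
proof -
  let ?n = "length as"
  define k0 where "k0 = (p + ?n - Suc q) mod ?n"
  have key: "rot (Suc k0) (rot (Suc q) as) = rot (Suc p) as \<and> rsign deg (Suc q) as * rsign deg (Suc k0) (rot (Suc q) as) = (rsign deg (Suc p) as :: 'k)"
  proof (cases "q < p")
    case True
    have e1: "p + ?n - Suc q = (p - q - 1) + ?n" using True by arith
    have "k0 = ((p - q - 1) + ?n) mod ?n" unfolding k0_def by (simp only: e1)
    also have "\<dots> = p - q - 1" using True assms by (simp only: mod_add_self2, intro mod_less, arith)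
    finally have "k0 = p - q - 1" .
    then have "Suc q + Suc k0 = Suc p" using True by simp
    then show ?thesis using rot_add[of "Suc q" "Suc k0" as deg] assms by simp
  next
    case False
    then have pq: "p < q" using assms by simp
    have "k0 = p + ?n - Suc q" unfolding k0_def using pq assms by simp
    then have e: "Suc q + Suc k0 - ?n = Suc p" "Suc k0 \<le> ?n" "?n \<le> Suc q + Suc k0" using pq assms by auto
    show ?thesis using rot_add2[of "Suc q" as "Suc k0" deg] e assms by simp
  qed
  have "cterm deg (phi_tilde deg \<phi>0) as p q = rsign deg (Suc q) as * (\<phi>0 (rot (Suc q) as) - rsign deg (Suc k0) (rot (Suc q) as) * \<phi>0 (rot (Suc k0) (rot (Suc q) as)))"
    unfolding cterm_def phi_tilde_def k0_def by simp
  also have "\<dots> = rsign deg (Suc q) as * \<phi>0 (rot (Suc q) as) - (rsign deg (Suc q) as * rsign deg (Suc k0) (rot (Suc q) as)) * \<phi>0 (rot (Suc k0) (rot (Suc q) as))"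
    by (simp add: algebra_simps)
  also have "\<dots> = rsign deg (Suc q) as * \<phi>0 (rot (Suc q) as) - rsign deg (Suc p) as * \<phi>0 (rot (Suc p) as)"
    using key by simp
  finally show ?thesis .
qed

lemma closed: "closed_ip deg (phi_tilde deg (\<phi>0 :: 'b list \<Rightarrow> 'k::comm_ring_1))"
  unfolding closed_ip_def
proof (intro allI impI)
  fix as :: "'b list" and i j k assume h: "i < j \<and> j < k \<and> k < length as"
  show "cterm deg (phi_tilde deg \<phi>0) as i j + cterm deg (phi_tilde deg \<phi>0) as j k + cterm deg (phi_tilde deg \<phi>0) as k i = 0"
    using h by (simp add: cterm_eq)
qed

definition T :: "('b \<Rightarrow> int) \<Rightarrow> ('b list \<Rightarrow> 'b \<Rightarrow> 'k::comm_ring_1) \<Rightarrow> ('b list \<Rightarrow> 'k) \<Rightarrow> 'b list \<Rightarrow> nat \<Rightarrow> nat \<Rightarrow> 'k" where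
  "T deg m \<eta> zs i L = sgnk (eps deg (take i zs)) * ins m \<eta> (take i zs) (take L (drop i zs)) (drop (i+L) zs)"

definition U :: "('b \<Rightarrow> int) \<Rightarrow> ('b list \<Rightarrow> 'b \<Rightarrow> 'k::comm_ring_1) \<Rightarrow> ('b list \<Rightarrow> 'k) \<Rightarrow> 'b list \<Rightarrow> nat \<Rightarrow> nat \<Rightarrow> nat \<Rightarrow> 'k" where
  "U deg m \<eta> xs a i L = rsign deg a xs * T deg m \<eta> (rot a xs) i L"

definition W :: "('b \<Rightarrow> int) \<Rightarrow> ('b list \<Rightarrow> 'k::comm_ring_1) \<Rightarrow> nat \<Rightarrow> 'b list \<Rightarrow> 'k" where
  "W deg \<eta> k ys = rsign deg (Suc k) ys * \<eta> (rot (Suc k) ys)"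

lemma T_dec: "T deg m \<eta> (P @ B @ Q) (length P) (length B) = sgnk (eps deg P) * ins m \<eta> P B Q"
  by (simp add: T_def)

lemma ainf_sd: "ainf_alg deg m \<Longrightarrow> m B e \<noteq> 0 \<Longrightarrow> sd deg e = eps deg B + 1"
  by (simp add: ainf_alg_def)

lemma ins_cong:
  assumes "ainf_alg deg m"
    and "\<And>e. sd deg e = eps deg B + 1 \<Longrightarrow> F (pre @ e # post) = c * G (pre' @ e # post')"
  shows "ins m F pre B post = c * ins m G pre' B post'"
  unfolding ins_def sum_distrib_left
proof (rule sum.cong[OF refl])
  fix x assume "x \<in> {e. m B e \<noteq> 0}"
  then have "sd deg x = eps deg B + 1" using ainf_sd[OF assms(1)] by simp
  then show "m B x * F (pre @ x # post) = c * (m B x * G (pre' @ x # post'))" using assms(2) by simp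
qed

lemma ins_phi_tilde:
  "ins m (phi_tilde deg \<eta> k) pre B post = ins m \<eta> pre B post - ins m (W deg \<eta> k) pre B post"
  by (simp add: ins_def phi_tilde_def W_def sum_subtractf right_diff_distrib)

lemma ga_dec:
  fixes \<eta> :: "'b list \<Rightarrow> 'k::comm_ring_1"
  assumes "ainf_alg deg m" "length P1 = Suc k"
  shows "sgnk (eps deg (P1 @ P2)) * ins m (W deg \<eta> k) (P1 @ P2) B Q
       = rsign deg (Suc k) (P1 @ P2 @ B @ Q) * (sgnk (eps deg P2) * ins m \<eta> P2 B (Q @ P1))"
proof -
  have "ins m (W deg \<eta> k) (P1 @ P2) B Q = sgnk (eps deg P1 * (eps deg P2 + (eps deg B + 1) + eps deg Q)) * ins m \<eta> P2 B (Q @ P1)"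
    apply (rule ins_cong[OF assms(1)])
    using assms(2) by (simp add: W_def rot_app rsign_app algebra_simps)
  moreover have "rsign deg (Suc k) (P1 @ P2 @ B @ Q) = (sgnk (eps deg P1 * (eps deg P2 + eps deg B + eps deg Q)) :: 'k)"
    using assms(2) by (simp add: rsign_app add.assoc)
  ultimately show ?thesis
    apply (simp only: mult.assoc[symmetric] sgnk_mult)
    apply (rule arg_cong[where f="\<lambda>x. x * _"], rule sgnk_cong)
    by (auto simp: even_add even_mult_iff)
qed

lemma gb_dec:
  fixes \<eta> :: "'b list \<Rightarrow> 'k::comm_ring_1"
  assumes "ainf_alg deg m" "length P1 + length P2 = kk"
  shows "sgnk (eps deg P1) * ins m (W deg \<eta> kk) P1 B (P2 @ Q)
       = rsign deg (length P1 + length B + length P2) (P1 @ B @ P2 @ Q) * (sgnk (eps deg (Q @ P1)) * ins m \<eta> (Q @ P1) B P2)"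
proof -
  have "ins m (W deg \<eta> kk) P1 B (P2 @ Q) = sgnk ((eps deg P1 + (eps deg B + 1) + eps deg P2) * eps deg Q) * ins m \<eta> (Q @ P1) B P2"
    apply (rule ins_cong[OF assms(1)])
    subgoal for e
    proof -
      assume h: "sd deg e = eps deg B + 1"
      have r1: "rot (Suc kk) (P1 @ e # P2 @ Q) = Q @ P1 @ e # P2" using assms(2) rot_app[of "Suc kk" "P1 @ e # P2" Q] by simp
      have r2: "rsign deg (Suc kk) (P1 @ e # P2 @ Q) = (sgnk ((eps deg P1 + (eps deg B + 1) + eps deg P2) * eps deg Q) :: 'k)"
        using assms(2) rsign_app[of "Suc kk" "P1 @ e # P2" deg Q] h by (simp add: algebra_simps)
      show ?thesis unfolding W_def r1 r2 by simp
    qed done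
  moreover have "rsign deg (length P1 + length B + length P2) (P1 @ B @ P2 @ Q) = (sgnk ((eps deg P1 + eps deg B + eps deg P2) * eps deg Q) :: 'k)"
    using rsign_app[of "length P1 + length B + length P2" "P1 @ B @ P2" deg Q] by (simp add: add.assoc)
  ultimately show ?thesis
    apply (simp only: mult.assoc[symmetric] sgnk_mult)
    apply (rule arg_cong[where f="\<lambda>x. x * _"], rule sgnk_cong)
    by (auto simp: even_add even_mult_iff)
qed

lemma gc_dec:
  fixes \<eta> :: "'b list \<Rightarrow> 'k::comm_ring_1"
  assumes "ainf_alg deg m"
  shows "sgnk (eps deg P) * ins m (W deg \<eta> (length P)) P B Q
       = rsign deg (length P + length B) (P @ B @ Q) * (sgnk (eps deg (Q @ P)) * ins m \<eta> (Q @ P) B [])"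
proof -
  have "ins m (W deg \<eta> (length P)) P B Q = sgnk ((eps deg P + (eps deg B + 1)) * eps deg Q) * ins m \<eta> (Q @ P) B []"
    apply (rule ins_cong[OF assms(1)])
    subgoal for e
    proof -
      assume h: "sd deg e = eps deg B + 1"
      have r1: "rot (Suc (length P)) (P @ e # Q) = Q @ P @ [e]" using rot_app[of "Suc (length P)" "P @ [e]" Q] by simp
      have r2: "rsign deg (Suc (length P)) (P @ e # Q) = (sgnk ((eps deg P + (eps deg B + 1)) * eps deg Q) :: 'k)"
        using rsign_app[of "Suc (length P)" "P @ [e]" deg Q] h by (simp add: algebra_simps)
      show ?thesis unfolding W_def r1 r2 by simp
    qed done
  moreover have "rsign deg (length P + length B) (P @ B @ Q) = (sgnk ((eps deg P + eps deg B) * eps deg Q) :: 'k)"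
    by (simp add: rsign_app2)
  ultimately show ?thesis
    apply (simp only: mult.assoc[symmetric] sgnk_mult)
    apply (rule arg_cong[where f="\<lambda>x. x * _"], rule sgnk_cong)
    by (auto simp: even_add even_mult_iff)
qed

lemma rhs_dec:
  fixes \<eta> :: "'b list \<Rightarrow> 'k::comm_ring_1"
  assumes "ainf_alg deg m" "length B1 = Suc kk"
  shows "rsign deg (length P) (P @ B1 @ B2 @ Q) * sgnk (eps deg (B1 @ B2)) * ins m (W deg \<eta> kk) (B1 @ B2) (Q @ P) []
       = rsign deg (length P + length B1) (P @ B1 @ B2 @ Q) * (sgnk (eps deg B2) * ins m \<eta> B2 (Q @ P) B1)"
proof -
  have "ins m (W deg \<eta> kk) (B1 @ B2) (Q @ P) [] = sgnk (eps deg B1 * (eps deg B2 + (eps deg Q + eps deg P + 1))) * ins m \<eta> B2 (Q @ P) B1"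
    apply (rule ins_cong[OF assms(1)])
    using assms(2) by (simp add: W_def rot_app rsign_app)
  moreover have "rsign deg (length P + length B1) (P @ B1 @ B2 @ Q) = (sgnk ((eps deg P + eps deg B1) * (eps deg B2 + eps deg Q)) :: 'k::comm_ring_1)"
    by (simp add: rsign_app2)
  moreover have "rsign deg (length P) (P @ B1 @ B2 @ Q) = (sgnk (eps deg P * (eps deg B1 + eps deg B2 + eps deg Q)) :: 'k)"
    by (simp add: rsign_app add.assoc)
  ultimately show ?thesis
    apply (simp only: mult.assoc[symmetric] sgnk_mult)
    apply (rule arg_cong[where f="\<lambda>x. x * _"], rule sgnk_cong)
    by (auto simp: even_add even_mult_iff)
qed

lemma take_split: "i \<le> j \<Longrightarrow> take j xs = take i xs @ take (j-i) (drop i xs)"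
  by (metis le_add_diff_inverse take_add)
lemma drop_split: "drop i xs = take L (drop i xs) @ drop (i+L) xs"
  by (metis append_take_drop_id drop_drop add.commute)

lemma ga_idx:
  fixes \<eta> :: "'b list \<Rightarrow> 'k::comm_ring_1"
  assumes "ainf_alg deg m" "Suc k \<le> i" "i + L \<le> length xs"
  shows "sgnk (eps deg (take i xs)) * ins m (W deg \<eta> k) (take i xs) (take L (drop i xs)) (drop (i+L) xs)
       = U deg m \<eta> xs (Suc k) (i - Suc k) L"
proof -
  define P1 where "P1 = take (Suc k) xs"
  define P2 where "P2 = take (i - Suc k) (drop (Suc k) xs)"
  define B where "B = take L (drop i xs)"
  define Q where "Q = drop (i+L) xs"
  have t: "take i xs = P1 @ P2" unfolding P1_def P2_def using assms(2) by (rule take_split)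
  have d: "drop i xs = B @ Q" unfolding B_def Q_def by (rule drop_split)
  have xs: "xs = P1 @ P2 @ B @ Q" by (metis append_take_drop_id t d append.assoc)
  have l: "length P1 = Suc k" "length P2 = i - Suc k" "length B = L" unfolding P1_def P2_def B_def using assms by auto
  have "sgnk (eps deg (take i xs)) * ins m (W deg \<eta> k) (take i xs) (take L (drop i xs)) (drop (i+L) xs)
      = sgnk (eps deg (P1 @ P2)) * ins m (W deg \<eta> k) (P1 @ P2) B Q" unfolding t B_def Q_def ..
  also have "\<dots> = rsign deg (Suc k) (P1 @ P2 @ B @ Q) * (sgnk (eps deg P2) * ins m \<eta> P2 B (Q @ P1))"
    by (rule ga_dec[OF assms(1) l(1)])
  also have "\<dots> = U deg m \<eta> xs (Suc k) (i - Suc k) L"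
    unfolding U_def xs[symmetric] using T_dec[of deg m \<eta> P2 B "Q @ P1"] rot_app[of "Suc k" P1 "P2 @ B @ Q"] l
    by (simp add: xs[symmetric])
  finally show ?thesis .
qed

lemma gb_idx:
  fixes \<eta> :: "'b list \<Rightarrow> 'k::comm_ring_1"
  assumes "ainf_alg deg m" "i + L \<le> k" "Suc k \<le> length xs"
  shows "sgnk (eps deg (take i xs)) * ins m (W deg \<eta> (k + 1 - L)) (take i xs) (take L (drop i xs)) (drop (i+L) xs)
       = U deg m \<eta> xs (Suc k) (i + length xs - Suc k) L"
proof -
  define P1 where "P1 = take i xs"
  define B where "B = take L (drop i xs)"
  define P2 where "P2 = take (Suc k - (i+L)) (drop (i+L) xs)"
  define Q where "Q = drop (Suc k) xs"
  have d: "drop i xs = B @ drop (i+L) xs" unfolding B_def by (rule drop_split)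
  have d2: "drop (i+L) xs = P2 @ Q" unfolding P2_def Q_def using drop_split[of "i+L" xs "Suc k - (i+L)"] assms by simp
  have xs: "xs = P1 @ B @ P2 @ Q" unfolding P1_def by (metis append_take_drop_id d d2)
  have l: "length P1 = i" "length P2 = Suc k - (i+L)" "length B = L" "length Q = length xs - Suc k"
    unfolding P1_def P2_def B_def Q_def using assms by auto
  have lP: "length P1 + length P2 = k + 1 - L" using l assms by simp
  have "sgnk (eps deg (take i xs)) * ins m (W deg \<eta> (k + 1 - L)) (take i xs) (take L (drop i xs)) (drop (i+L) xs)
      = sgnk (eps deg P1) * ins m (W deg \<eta> (k + 1 - L)) P1 B (P2 @ Q)" unfolding P1_def B_def d2 ..
  also have "\<dots> = rsign deg (length P1 + length B + length P2) (P1 @ B @ P2 @ Q) * (sgnk (eps deg (Q @ P1)) * ins m \<eta> (Q @ P1) B P2)"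
    by (rule gb_dec[OF assms(1) lP])
  also have "\<dots> = U deg m \<eta> xs (Suc k) (i + length xs - Suc k) L"
  proof -
    have e1: "length P1 + length B + length P2 = Suc k" using l assms by simp
    have e2: "i + length xs - Suc k = length (Q @ P1)" using l assms by simp
    have r: "rot (Suc k) xs = (Q @ P1) @ B @ P2" using rot_app[of "Suc k" "P1 @ B @ P2" Q] e1 xs by simp
    show ?thesis unfolding U_def e1 xs[symmetric] r e2 l(3)[symmetric] T_dec ..
  qed
  finally show ?thesis .
qed

lemma gc_idx:
  fixes \<eta> :: "'b list \<Rightarrow> 'k::comm_ring_1"
  assumes "ainf_alg deg m" "i + L \<le> length xs"
  shows "sgnk (eps deg (take i xs)) * ins m (W deg \<eta> i) (take i xs) (take L (drop i xs)) (drop (i+L) xs)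
       = U deg m \<eta> xs (i + L) (length xs - L) L"
proof -
  define P where "P = take i xs"
  define B where "B = take L (drop i xs)"
  define Q where "Q = drop (i+L) xs"
  have d: "drop i xs = B @ Q" unfolding B_def Q_def by (rule drop_split)
  have xs: "xs = P @ B @ Q" unfolding P_def by (metis append_take_drop_id d)
  have l: "length P = i" "length B = L" unfolding P_def B_def using assms by auto
  have "sgnk (eps deg (take i xs)) * ins m (W deg \<eta> i) (take i xs) (take L (drop i xs)) (drop (i+L) xs)
      = sgnk (eps deg P) * ins m (W deg \<eta> (length P)) P B Q" unfolding P_def B_def Q_def l(1)[unfolded P_def] ..
  also have "\<dots> = rsign deg (length P + length B) (P @ B @ Q) * (sgnk (eps deg (Q @ P)) * ins m \<eta> (Q @ P) B [])"
    by (rule gc_dec[OF assms(1)])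
  also have "\<dots> = U deg m \<eta> xs (i + L) (length xs - L) L"
  proof -
    have e1: "length P + length B = i + L" using l by simp
    have e2: "length xs - L = length (Q @ P)" using l xs by simp
    have r: "rot (i + L) xs = (Q @ P) @ B @ []" using rot_app[of "i + L" "P @ B" Q] e1 xs by simp
    have tt: "T deg m \<eta> (rot (i+L) xs) (length xs - L) L = sgnk (eps deg (Q @ P)) * ins m \<eta> (Q @ P) B []"
      using T_dec[of deg m \<eta> "Q @ P" B "[]"] r e2 l(2) by simp
    show ?thesis unfolding U_def tt e1 xs[symmetric] ..
  qed
  finally show ?thesis .
qed

lemma rhs_idx:
  fixes \<eta> :: "'b list \<Rightarrow> 'k::comm_ring_1"
  assumes "ainf_alg deg m" "i \<le> k" "Suc k \<le> i + L" "i + L \<le> length xs"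
  shows "- (rsign deg i xs * sgnk (eps deg (take L (drop i xs)))) *
           ins m (phi_tilde deg \<eta> (k - i)) (take L (drop i xs)) (drop (i + L) xs @ take i xs) []
       = - U deg m \<eta> xs i L (length xs - L) + U deg m \<eta> xs (Suc k) (i + L - Suc k) (length xs - L)"
proof -
  define P where "P = take i xs"
  define B1 where "B1 = take (Suc k - i) (drop i xs)"
  define B2 where "B2 = take (i + L - Suc k) (drop (Suc k) xs)"
  define Q where "Q = drop (i+L) xs"
  have d: "drop i xs = B1 @ drop (Suc k) xs" unfolding B1_def using drop_split[of i xs "Suc k - i"] assms by simp
  have d2: "drop (Suc k) xs = B2 @ Q" unfolding B2_def Q_def using drop_split[of "Suc k" xs "i + L - Suc k"] assms by simp
  have xs: "xs = P @ B1 @ B2 @ Q" unfolding P_def by (metis append_take_drop_id d d2)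
  have l: "length P = i" "length B1 = Suc (k - i)" "length B2 = i + L - Suc k" "length Q = length xs - (i + L)"
    unfolding P_def B1_def B2_def Q_def using assms by auto
  have tb: "take L (drop i xs) = B1 @ B2"
  proof -
    have "drop i xs = (B1 @ B2) @ Q" using d d2 by simp
    moreover have "length (B1 @ B2) = L" using l assms by simp
    ultimately show ?thesis by simp
  qed
  have rw: "- (rsign deg i xs * sgnk (eps deg (take L (drop i xs)))) *
           ins m (phi_tilde deg \<eta> (k - i)) (take L (drop i xs)) (drop (i + L) xs @ take i xs) []
        = - (rsign deg (length P) (P @ B1 @ B2 @ Q) * sgnk (eps deg (B1 @ B2)) * ins m \<eta> (B1 @ B2) (Q @ P) [])
          + rsign deg (length P) (P @ B1 @ B2 @ Q) * sgnk (eps deg (B1 @ B2)) * ins m (W deg \<eta> (k - i)) (B1 @ B2) (Q @ P) []"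
    unfolding tb ins_phi_tilde Q_def[symmetric] P_def[symmetric] l(1) xs[symmetric] by (simp add: algebra_simps)
  have A: "rsign deg (length P) (P @ B1 @ B2 @ Q) * sgnk (eps deg (B1 @ B2)) * ins m \<eta> (B1 @ B2) (Q @ P) []
         = U deg m \<eta> xs i L (length xs - L)"
  proof -
    have e2: "length xs - L = length (Q @ P)" "L = length (B1 @ B2)" using l assms by auto
    have r: "rot i xs = (B1 @ B2) @ (Q @ P) @ []" using rot_app[of i P "B1 @ B2 @ Q"] l xs by simp
    have tt: "T deg m \<eta> (rot i xs) L (length xs - L) = sgnk (eps deg (B1 @ B2)) * ins m \<eta> (B1 @ B2) (Q @ P) []"
      using T_dec[of deg m \<eta> "B1 @ B2" "Q @ P" "[]"] r e2 by simp
    show ?thesis unfolding U_def tt l(1) xs[symmetric] by (simp add: mult.assoc)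
  qed
  have B: "rsign deg (length P) (P @ B1 @ B2 @ Q) * sgnk (eps deg (B1 @ B2)) * ins m (W deg \<eta> (k - i)) (B1 @ B2) (Q @ P) []
         = U deg m \<eta> xs (Suc k) (i + L - Suc k) (length xs - L)"
  proof -
    have e1: "length P + length B1 = Suc k" using l assms by simp
    have e2: "length xs - L = length (Q @ P)" "i + L - Suc k = length B2" using l assms by auto
    have r: "rot (Suc k) xs = B2 @ (Q @ P) @ B1" using rot_app[of "Suc k" "P @ B1" "B2 @ Q"] e1 xs by simp
    have T2: "T deg m \<eta> (rot (Suc k) xs) (i + L - Suc k) (length xs - L) = sgnk (eps deg B2) * ins m \<eta> B2 (Q @ P) B1"
      using T_dec[of deg m \<eta> B2 "Q @ P" B1] r e2 by simp
    have "rsign deg (length P) (P @ B1 @ B2 @ Q) * sgnk (eps deg (B1 @ B2)) * ins m (W deg \<eta> (k - i)) (B1 @ B2) (Q @ P) []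
        = rsign deg (length P + length B1) (P @ B1 @ B2 @ Q) * (sgnk (eps deg B2) * ins m \<eta> B2 (Q @ P) B1)"
      by (rule rhs_dec[OF assms(1) l(2)])
    then show ?thesis unfolding U_def T2 e1 xs[symmetric] .
  qed
  show ?thesis unfolding rw A B ..
qed

definition In :: "nat \<Rightarrow> (nat \<times> nat) set" where "In n = {(i,L). i < n \<and> 1 \<le> L \<and> L \<le> n - 1 - i}"
definition Out :: "nat \<Rightarrow> (nat \<times> nat) set" where "Out n = {(j,p). j < n \<and> p \<le> n - 1 - j}"
definition Rs :: "nat \<Rightarrow> nat \<Rightarrow> (nat \<times> nat) set" where "Rs n k = {(i,L). i \<le> k \<and> k + 1 - i \<le> L \<and> L \<le> n - 1 - i}"

lemma fin_sub: "S \<subseteq> {..n::nat} \<times> {..n} \<Longrightarrow> finite S"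
  by (rule finite_subset) auto

lemma fin_In: "finite (In n)" by (rule fin_sub[of _ n]) (auto simp: In_def)
lemma fin_Out: "finite (Out n)" by (rule fin_sub[of _ n]) (auto simp: Out_def)
lemma fin_Rs: "finite (Rs n k)" by (rule fin_sub[of _ n]) (auto simp: Rs_def)

lemma Sig_In: "Sigma {..<n} (\<lambda>i. {1..n - 1 - i}) = In n" by (auto simp: In_def)
lemma Sig_Out: "Sigma {..<n} (\<lambda>j. {..n - 1 - j}) = Out n" by (auto simp: Out_def)
lemma Sig_Rs: "Sigma {..k} (\<lambda>i. {k + 1 - i..n - 1 - i}) = Rs n k" by (auto simp: Rs_def)

lemma dsum_In: "(\<Sum>i<n. \<Sum>L\<in>{1..n - 1 - i}. f i L) = (\<Sum>(i,L)\<in>In n. f i L)"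
  unfolding Sig_In[symmetric] by (rule sum.Sigma) auto
lemma dsum_Out: "(\<Sum>j<n. \<Sum>p\<le>n - 1 - j. f j p) = (\<Sum>(j,p)\<in>Out n. f j p)"
  unfolding Sig_Out[symmetric] by (rule sum.Sigma) auto
lemma dsum_Rs: "(\<Sum>i\<le>k. \<Sum>L\<in>{k + 1 - i..n - 1 - i}. f i L) = (\<Sum>(i,L)\<in>Rs n k. f i L)"
  unfolding Sig_Rs[symmetric] by (rule sum.Sigma) auto

lemma out_term: "p \<le> length zs \<Longrightarrow> T deg m \<eta> zs p (length zs - p) = sgnk (eps deg (take p zs)) * ins m \<eta> (take p zs) (drop p zs) []"
  by (simp add: T_def)

lemma hoch_U:
  "hoch_b deg m \<eta> xs = (\<Sum>(i,L)\<in>In (length xs). U deg m \<eta> xs 0 i L)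
     + (\<Sum>(j,p)\<in>Out (length xs). U deg m \<eta> xs j p (length xs - p))"
proof -
  have 1: "(\<Sum>(i,L)\<in>In (length xs). sgnk (eps deg (take i xs)) * ins m \<eta> (take i xs) (take L (drop i xs)) (drop (i + L) xs))
     = (\<Sum>(i,L)\<in>In (length xs). U deg m \<eta> xs 0 i L)"
    by (rule sum.cong) (auto simp: U_def T_def)
  have 2: "(\<Sum>(j,p)\<in>Out (length xs). rsign deg j xs * sgnk (eps deg (take p (rot j xs))) * ins m \<eta> (take p (rot j xs)) (drop p (rot j xs)) [])
     = (\<Sum>(j,p)\<in>Out (length xs). U deg m \<eta> xs j p (length xs - p))"
  proof (rule sum.cong[OF refl])
    fix x assume "x \<in> Out (length xs)"
    then obtain j p where x: "x = (j,p)" "p \<le> length xs" by (cases x) (auto simp: Out_def)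
    have "T deg m \<eta> (rot j xs) p (length xs - p) = sgnk (eps deg (take p (rot j xs))) * ins m \<eta> (take p (rot j xs)) (drop p (rot j xs)) []"
      using out_term[of p "rot j xs" deg m \<eta>] x by simp
    then show "(case x of (j, p) \<Rightarrow> rsign deg j xs * sgnk (eps deg (take p (rot j xs))) * ins m \<eta> (take p (rot j xs)) (drop p (rot j xs)) []) =
         (case x of (j, p) \<Rightarrow> U deg m \<eta> xs j p (length xs - p))" unfolding x U_def by (simp add: mult.assoc)
  qed
  show ?thesis unfolding hoch_b_def dsum_In dsum_Out 1 2 ..
qed

definition fr :: "nat \<Rightarrow> nat \<Rightarrow> nat \<Rightarrow> nat" where
  "fr n k j = (if Suc k + j < n then Suc k + j else Suc k + j - n)"

lemma U_rot:
  assumes "Suc k \<le> length xs" "j < length xs"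
  shows "rsign deg (Suc k) xs * U deg m \<eta> (rot (Suc k) xs) j p L = (U deg m \<eta> xs (fr (length xs) k j) p L :: 'k::comm_ring_1)"
proof (cases "Suc k + j < length xs")
  case True
  then have "rot j (rot (Suc k) xs) = rot (Suc k + j) xs \<and> rsign deg (Suc k) xs * rsign deg j (rot (Suc k) xs) = (rsign deg (Suc k + j) xs :: 'k)"
    by (intro rot_add) simp
  then show ?thesis using True unfolding U_def fr_def by (simp add: mult.assoc[symmetric])
next
  case False
  then have "rot j (rot (Suc k) xs) = rot (Suc k + j - length xs) xs \<and> rsign deg (Suc k) xs * rsign deg j (rot (Suc k) xs) = (rsign deg (Suc k + j - length xs) xs :: 'k)"
    using assms by (intro rot_add2) auto
  then show ?thesis using False unfolding U_def fr_def by (simp add: mult.assoc[symmetric])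
qed

lemma hoch_rot:
  fixes \<eta> :: "'b list \<Rightarrow> 'k::comm_ring_1"
  assumes "Suc k \<le> length xs"
  shows "rsign deg (Suc k) xs * hoch_b deg m \<eta> (rot (Suc k) xs)
     = (\<Sum>(i,L)\<in>In (length xs). U deg m \<eta> xs (Suc k) i L)
     + (\<Sum>(j,p)\<in>Out (length xs). U deg m \<eta> xs (fr (length xs) k j) p (length xs - p))"
proof -
  have 1: "rsign deg (Suc k) xs * U deg m \<eta> (rot (Suc k) xs) 0 i L = U deg m \<eta> xs (Suc k) i L" for i L
    by (simp add: U_def)
  have 2: "(\<Sum>(j,p)\<in>Out (length xs). rsign deg (Suc k) xs * U deg m \<eta> (rot (Suc k) xs) j p (length xs - p))
    = (\<Sum>(j,p)\<in>Out (length xs). U deg m \<eta> xs (fr (length xs) k j) p (length xs - p))"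
    by (rule sum.cong[OF refl]) (auto simp: Out_def U_rot assms)
  have A: "rsign deg (Suc k) xs * (\<Sum>(i,L)\<in>In (length xs). U deg m \<eta> (rot (Suc k) xs) 0 i L) = (\<Sum>(i,L)\<in>In (length xs). U deg m \<eta> xs (Suc k) i L)"
    by (simp add: sum_distrib_left case_prod_unfold 1)
  have B: "rsign deg (Suc k) xs * (\<Sum>(j,p)\<in>Out (length xs). U deg m \<eta> (rot (Suc k) xs) j p (length xs - p))
     = (\<Sum>(j,p)\<in>Out (length xs). U deg m \<eta> xs (fr (length xs) k j) p (length xs - p))"
    using 2 by (simp add: sum_distrib_left case_prod_unfold)
  show ?thesis unfolding hoch_U[of deg m \<eta> "rot (Suc k) xs"] length_rot distrib_left A B ..
qed

definition Ia :: "nat \<Rightarrow> nat \<Rightarrow> (nat \<times> nat) set" where "Ia n k = {(i,L). Suc k \<le> i \<and> 1 \<le> L \<and> i + L \<le> n - 1}"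
definition Ib :: "nat \<Rightarrow> nat \<Rightarrow> (nat \<times> nat) set" where "Ib n k = {(i,L). 1 \<le> L \<and> i + L \<le> k}"
definition Ic :: "nat \<Rightarrow> nat \<Rightarrow> (nat \<times> nat) set" where "Ic n k = {(i,L). i \<le> k \<and> k < i + L \<and> i + L \<le> n - 1}"

lemma fin_Ia: "finite (Ia n k)" by (rule fin_sub[of _ n]) (auto simp: Ia_def)
lemma fin_Ib: "finite (Ib n k)" by (rule fin_sub[of _ k]) (auto simp: Ib_def)
lemma fin_Ic: "finite (Ic n k)" by (rule fin_sub[of _ n]) (auto simp: Ic_def)

lemma In_split:
  assumes "Suc (Suc k) \<le> n"
  shows "(\<Sum>(i,L)\<in>In n. f i L) = (\<Sum>(i,L)\<in>Ia n k. f i L) + (\<Sum>(i,L)\<in>Ib n k. f i L) + (\<Sum>(i,L)\<in>Ic n k. f i L)"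
proof -
  have e: "In n = (Ia n k \<union> Ib n k) \<union> Ic n k" using assms by (auto simp: In_def Ia_def Ib_def Ic_def)
  have d1: "Ia n k \<inter> Ib n k = {}" by (auto simp: Ia_def Ib_def)
  have d2: "(Ia n k \<union> Ib n k) \<inter> Ic n k = {}" by (auto simp: Ia_def Ib_def Ic_def)
  show ?thesis unfolding e
    by (simp add: sum.union_disjoint fin_Ia fin_Ib fin_Ic d1 d2)
qed

lemma E1:
  fixes h :: "nat \<Rightarrow> nat \<Rightarrow> 'a::comm_monoid_add"
  assumes "Suc (Suc k) \<le> n"
  shows "(\<Sum>(i,L)\<in>In n. h i L) = (\<Sum>(i,L)\<in>Ia n k. h (i - Suc k) L) + (\<Sum>(i,L)\<in>Ib n k. h (i + n - Suc k) L)
          + (\<Sum>(i,L)\<in>Rs n k. h (i + L - Suc k) (n - L))"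
proof -
  define A1 where "A1 = {(i,L). 1 \<le> L \<and> i + L \<le> n - 2 - k}"
  define B1 where "B1 = {(i,L). 1 \<le> L \<and> n - 1 - k \<le> i \<and> i + L \<le> n - 1}"
  define C1 where "C1 = {(i,L). i \<le> n - 2 - k \<and> n - 1 - k \<le> i + L \<and> i + L \<le> n - 1}"
  have fA: "finite A1" unfolding A1_def by (rule fin_sub[of _ n]) auto
  have fB: "finite B1" unfolding B1_def by (rule fin_sub[of _ n]) auto
  have fC: "finite C1" unfolding C1_def by (rule fin_sub[of _ n]) auto
  have e: "In n = (A1 \<union> B1) \<union> C1" using assms by (auto simp: In_def A1_def B1_def C1_def)
  have d1: "A1 \<inter> B1 = {}" by (auto simp: A1_def B1_def)
  have d2: "(A1 \<union> B1) \<inter> C1 = {}" using assms by (auto simp: A1_def B1_def C1_def)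
  have ba: "bij_betw (\<lambda>(i,L). (i - Suc k, L)) (Ia n k) A1"
    by (rule bij_betw_byWitness[where f'="\<lambda>(i,L). (i + Suc k, L)"]) (auto simp: Ia_def A1_def)
  have bb: "bij_betw (\<lambda>(i,L). (i + n - Suc k, L)) (Ib n k) B1"
    by (rule bij_betw_byWitness[where f'="\<lambda>(i,L). (i - (n - Suc k), L)"]) (use assms in \<open>auto simp: Ib_def B1_def\<close>)
  have bc: "bij_betw (\<lambda>(i,L). (i + L - Suc k, n - L)) (Rs n k) C1"
    by (rule bij_betw_byWitness[where f'="\<lambda>(i,L). (i + L + Suc k - n, n - L)"]) (use assms in \<open>auto simp: Rs_def C1_def\<close>)
  have sa: "(\<Sum>(i,L)\<in>Ia n k. h (i - Suc k) L) = (\<Sum>(i,L)\<in>A1. h i L)"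
    using sum.reindex_bij_betw[OF ba, of "\<lambda>(i,L). h i L"] by (simp add: case_prod_unfold)
  have sb: "(\<Sum>(i,L)\<in>Ib n k. h (i + n - Suc k) L) = (\<Sum>(i,L)\<in>B1. h i L)"
    using sum.reindex_bij_betw[OF bb, of "\<lambda>(i,L). h i L"] by (simp add: case_prod_unfold)
  have sc: "(\<Sum>(i,L)\<in>Rs n k. h (i + L - Suc k) (n - L)) = (\<Sum>(i,L)\<in>C1. h i L)"
    using sum.reindex_bij_betw[OF bc, of "\<lambda>(i,L). h i L"] by (simp add: case_prod_unfold)
  show ?thesis unfolding sa sb sc e
    by (simp add: sum.union_disjoint fA fB fC d1 d2)
qed

lemma E2:
  fixes V :: "nat \<Rightarrow> nat \<Rightarrow> 'a::ab_group_add"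
  assumes "Suc (Suc k) \<le> n"
  shows "(\<Sum>(j,p)\<in>Out n. V j p) - (\<Sum>(i,L)\<in>Rs n k. V i L)
       = (\<Sum>(j,p)\<in>Out n. V (fr n k j) p) - (\<Sum>(i,L)\<in>Ic n k. V (i + L) (n - L))"
proof -
  define K where "K = {(a,p). a < n \<and> a + p \<le> n - 1 \<and> (k < a \<or> a + p \<le> k)}"
  define Cm where "Cm = {(a,p). k < a \<and> a < n \<and> n \<le> a + p \<and> a + p \<le> n + k}"
  define O2 where "O2 = {(a,p). a < n \<and> (if k < a then p \<le> n - a + k else p \<le> k - a)}"
  have fK: "finite K" unfolding K_def by (rule fin_sub[of _ n]) auto
  have fC: "finite Cm" unfolding Cm_def by (rule fin_sub[of _ "n+k"]) auto
  have e1: "Out n = Rs n k \<union> K" using assms by (auto simp: Out_def Rs_def K_def)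
  have d1: "Rs n k \<inter> K = {}" using assms by (auto simp: Rs_def K_def)
  have e2: "O2 = Cm \<union> K" using assms by (auto simp: O2_def Cm_def K_def split: if_splits)
  have d2: "Cm \<inter> K = {}" using assms by (auto simp: Cm_def K_def)
  have b1: "bij_betw (\<lambda>(j,p). (fr n k j, p)) (Out n) O2"
    by (rule bij_betw_byWitness[where f'="\<lambda>(a,p). (if k < a then a - Suc k else a + n - Suc k, p)"])
      (use assms in \<open>auto simp: Out_def O2_def fr_def split: if_splits\<close>)
  have b2: "bij_betw (\<lambda>(i,L). (i + L, n - L)) (Ic n k) Cm"
    by (rule bij_betw_byWitness[where f'="\<lambda>(a,p). (a + p - n, n - p)"])
      (use assms in \<open>auto simp: Ic_def Cm_def\<close>)
  have s1: "(\<Sum>(j,p)\<in>Out n. V (fr n k j) p) = (\<Sum>(a,p)\<in>O2. V a p)"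
    using sum.reindex_bij_betw[OF b1, of "\<lambda>(a,p). V a p"] by (simp add: case_prod_unfold)
  have s2: "(\<Sum>(i,L)\<in>Ic n k. V (i + L) (n - L)) = (\<Sum>(a,p)\<in>Cm. V a p)"
    using sum.reindex_bij_betw[OF b2, of "\<lambda>(a,p). V a p"] by (simp add: case_prod_unfold)
  show ?thesis unfolding s1 s2 unfolding e1 e2
    by (simp add: sum.union_disjoint fin_Rs fK fC d1 d2)
qed

lemma L1_term:
  fixes \<eta> :: "'b list \<Rightarrow> 'k::comm_ring_1"
  shows "sgnk (eps deg (take i xs)) * ins m (phi_tilde deg \<eta> (j::nat)) (take i xs) (take L (drop i xs)) (drop (i + L) xs)
      = U deg m \<eta> xs 0 i L - sgnk (eps deg (take i xs)) * ins m (W deg \<eta> j) (take i xs) (take L (drop i xs)) (drop (i + L) xs)"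
  unfolding ins_phi_tilde right_diff_distrib by (simp add: U_def T_def)

lemma main_id:
  fixes \<eta> :: "'b list \<Rightarrow> 'k::comm_ring_1"
  assumes ainf: "ainf_alg deg m" and kn: "Suc (Suc k) \<le> length xs"
  shows "(\<Sum>i<length xs. \<Sum>L\<in>{1..length xs - 1 - i}.
         sgnk (eps deg (take i xs)) *
         ins m (phi_tilde deg \<eta> (if i \<le> k \<and> k < i + L then i else if i + L \<le> k then k + 1 - L else k))
           (take i xs) (take L (drop i xs)) (drop (i + L) xs))
      - (\<Sum>i\<le>k. \<Sum>L\<in>{k + 1 - i..length xs - 1 - i}.
         - (rsign deg i xs * sgnk (eps deg (take L (drop i xs)))) *
         ins m (phi_tilde deg \<eta> (k - i)) (take L (drop i xs)) (drop (i + L) xs @ take i xs) [])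
      = hoch_b deg m \<eta> xs - rsign deg (Suc k) xs * hoch_b deg m \<eta> (rot (Suc k) xs)"
proof -
  let ?n = "length xs"
  let ?idx = "\<lambda>i L. (if i \<le> k \<and> k < i + L then i else if i + L \<le> k then k + 1 - L else k)"
  define g where "g = (\<lambda>i L. sgnk (eps deg (take i xs)) * ins m (W deg \<eta> (?idx i L)) (take i xs) (take L (drop i xs)) (drop (i + L) xs))"
  define U0 where "U0 = (\<lambda>i L. U deg m \<eta> xs 0 i L)"
  define V where "V = (\<lambda>a p. U deg m \<eta> xs a p (?n - p))"
  define h where "h = (\<lambda>i L. U deg m \<eta> xs (Suc k) i L)"
  have L1: "(\<Sum>i<?n. \<Sum>L\<in>{1..?n - 1 - i}.
         sgnk (eps deg (take i xs)) *
         ins m (phi_tilde deg \<eta> (?idx i L)) (take i xs) (take L (drop i xs)) (drop (i + L) xs))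
     = (\<Sum>(i,L)\<in>In ?n. U0 i L) - (\<Sum>(i,L)\<in>In ?n. g i L)"
    unfolding dsum_In sum_subtractf[symmetric]
  proof (rule sum.cong[OF refl])
    fix x assume "x \<in> In ?n"
    obtain i L where x: "x = (i, L)" by (cases x)
    show "(case x of (i, L) \<Rightarrow> sgnk (eps deg (take i xs)) * ins m (phi_tilde deg \<eta> (?idx i L)) (take i xs) (take L (drop i xs)) (drop (i + L) xs))
      = (case x of (i, L) \<Rightarrow> U0 i L) - (case x of (i, L) \<Rightarrow> g i L)"
      unfolding x g_def U0_def prod.case by (rule L1_term)
  qed
  have Sa: "(\<Sum>(i,L)\<in>Ia ?n k. g i L) = (\<Sum>(i,L)\<in>Ia ?n k. h (i - Suc k) L)"
  proof (rule sum.cong[OF refl])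
    fix x assume xa: "x \<in> Ia ?n k"
    obtain i L where x: "x = (i, L)" by (cases x)
    have c: "Suc k \<le> i" "i + L \<le> ?n" using xa unfolding x Ia_def by auto
    have idx: "?idx i L = k" using c by auto
    show "(case x of (i, L) \<Rightarrow> g i L) = (case x of (i, L) \<Rightarrow> h (i - Suc k) L)"
      unfolding x prod.case g_def h_def idx by (rule ga_idx[OF ainf c])
  qed
  have Sb: "(\<Sum>(i,L)\<in>Ib ?n k. g i L) = (\<Sum>(i,L)\<in>Ib ?n k. h (i + ?n - Suc k) L)"
  proof (rule sum.cong[OF refl])
    fix x assume xa: "x \<in> Ib ?n k"
    obtain i L where x: "x = (i, L)" by (cases x)
    have c: "i + L \<le> k" "1 \<le> L" using xa unfolding x Ib_def by auto
    have c2: "Suc k \<le> ?n" using kn by simp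
    have idx: "?idx i L = k + 1 - L" using c by auto
    show "(case x of (i, L) \<Rightarrow> g i L) = (case x of (i, L) \<Rightarrow> h (i + ?n - Suc k) L)"
      unfolding x prod.case g_def h_def idx by (rule gb_idx[OF ainf c(1) c2])
  qed
  have Sc: "(\<Sum>(i,L)\<in>Ic ?n k. g i L) = (\<Sum>(i,L)\<in>Ic ?n k. V (i + L) (?n - L))"
  proof (rule sum.cong[OF refl])
    fix x assume xa: "x \<in> Ic ?n k"
    obtain i L where x: "x = (i, L)" by (cases x)
    have c: "i \<le> k" "k < i + L" "i + L \<le> ?n" using xa unfolding x Ic_def by auto
    have idx: "?idx i L = i" using c by auto
    have e: "?n - (?n - L) = L" using c by auto
    show "(case x of (i, L) \<Rightarrow> g i L) = (case x of (i, L) \<Rightarrow> V (i + L) (?n - L))"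
      unfolding x prod.case g_def V_def idx e by (rule gc_idx[OF ainf c(3)])
  qed
  have R1: "(\<Sum>i\<le>k. \<Sum>L\<in>{k + 1 - i..?n - 1 - i}.
         - (rsign deg i xs * sgnk (eps deg (take L (drop i xs)))) *
         ins m (phi_tilde deg \<eta> (k - i)) (take L (drop i xs)) (drop (i + L) xs @ take i xs) [])
     = - (\<Sum>(i,L)\<in>Rs ?n k. V i L) + (\<Sum>(i,L)\<in>Rs ?n k. h (i + L - Suc k) (?n - L))"
    unfolding dsum_Rs sum_negf[symmetric] sum.distrib[symmetric]
  proof (rule sum.cong[OF refl])
    fix x assume xa: "x \<in> Rs ?n k"
    obtain i L where x: "x = (i, L)" by (cases x)
    have c: "i \<le> k" "Suc k \<le> i + L" "i + L \<le> ?n" using xa kn unfolding x Rs_def by auto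
    show "(case x of (i, L) \<Rightarrow> - (rsign deg i xs * sgnk (eps deg (take L (drop i xs)))) *
         ins m (phi_tilde deg \<eta> (k - i)) (take L (drop i xs)) (drop (i + L) xs @ take i xs) [])
       = - (case x of (i, L) \<Rightarrow> V i L) + (case x of (i, L) \<Rightarrow> h (i + L - Suc k) (?n - L))"
      unfolding x prod.case V_def h_def by (rule rhs_idx[OF ainf c])
  qed
  have H1: "hoch_b deg m \<eta> xs = (\<Sum>(i,L)\<in>In ?n. U0 i L) + (\<Sum>(j,p)\<in>Out ?n. V j p)"
    unfolding hoch_U U0_def V_def ..
  have H2: "rsign deg (Suc k) xs * hoch_b deg m \<eta> (rot (Suc k) xs) = (\<Sum>(i,L)\<in>In ?n. h i L) + (\<Sum>(j,p)\<in>Out ?n. V (fr ?n k j) p)"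
    unfolding hoch_rot[OF Suc_leD[OF kn]] h_def V_def ..
  note e1 = E1[OF kn, of h]
  note e2 = E2[OF kn, of V]
  show ?thesis
    unfolding L1 R1 H1 H2 In_split[OF kn, of g] Sa Sb Sc e1
    using e2 by (simp add: algebra_simps)
qed

lemma butlast_mid1: "u \<in> set A \<Longrightarrow> u \<in> set (butlast (A @ e # P))"
  by (simp add: butlast_append)
lemma butlast_mid2: "u \<in> set (butlast P) \<Longrightarrow> u \<in> set (butlast (A @ e # P))"
  by (cases P) (simp_all add: butlast_append)

lemma TZ1:
  assumes "normalized u \<eta>" "u \<in> set (take i zs)"
  shows "T deg m \<eta> zs i L = 0"
proof -
  have "ins m \<eta> (take i zs) (take L (drop i zs)) (drop (i + L) zs) = 0"
    unfolding ins_def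
  proof (rule sum.neutral, intro ballI)
    fix e
    have "\<eta> (take i zs @ e # drop (i + L) zs) = 0"
      using assms butlast_mid1[of u "take i zs" e "drop (i + L) zs"] by (simp add: normalized_def)
    then show "m (take L (drop i zs)) e * \<eta> (take i zs @ e # drop (i + L) zs) = 0" by simp
  qed
  then show ?thesis by (simp add: T_def)
qed

lemma TZ2:
  assumes "normalized u \<eta>" "u \<in> set (butlast (drop (i + L) zs))"
  shows "T deg m \<eta> zs i L = 0"
proof -
  have "ins m \<eta> (take i zs) (take L (drop i zs)) (drop (i + L) zs) = 0"
    unfolding ins_def
  proof (rule sum.neutral, intro ballI)
    fix e
    have "\<eta> (take i zs @ e # drop (i + L) zs) = 0"
      using assms butlast_mid2[of u "drop (i + L) zs" "take i zs" e] by (simp add: normalized_def)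
    then show "m (take L (drop i zs)) e * \<eta> (take i zs @ e # drop (i + L) zs) = 0" by simp
  qed
  then show ?thesis by (simp add: T_def)
qed

lemma TZ3:
  assumes "unital deg m u" "u \<in> set (take L (drop i zs))" "L \<noteq> 2" "i + L \<le> length zs"
  shows "T deg m \<eta> zs i L = 0"
proof -
  have "length (take L (drop i zs)) \<noteq> 2" using assms by simp
  then have "{e. m (take L (drop i zs)) e \<noteq> 0} = {}" using assms(1,2) unfolding unital_def by blast
  then show ?thesis by (simp add: T_def ins_def)
qed

lemma nth_in_take: "t < i \<Longrightarrow> t < length xs \<Longrightarrow> xs ! t \<in> set (take i xs)"
  by (metis in_set_conv_nth length_take min_less_iff_conj nth_take)

lemma van_In:
  assumes nz: "normalized u \<eta>" and un: "unital deg m u" and t: "xs ! t = u" "Suc t < length xs"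
    and iL: "(i,L) \<in> In (length xs)" and ne: "\<not> (Suc i = t \<and> L = 2)" "\<not> (i = t \<and> L = 2)"
  shows "U deg m \<eta> xs 0 i L = 0"
proof -
  have c: "1 \<le> L" "i + L \<le> length xs - 1" using iL by (auto simp: In_def)
  have "T deg m \<eta> xs i L = 0"
  proof (cases "t < i")
    case True
    have "u \<in> set (take i xs)" using nth_in_take[OF True, of xs] t by simp
    then show ?thesis by (rule TZ1[OF nz])
  next
    case False
    show ?thesis
    proof (cases "i + L \<le> t")
      case True
      have "butlast (drop (i+L) xs) ! (t - (i+L)) = u" using True t c by (simp add: nth_butlast)
      moreover have "t - (i+L) < length (butlast (drop (i+L) xs))" using True t c by simp
      ultimately have "u \<in> set (butlast (drop (i + L) xs))" by (metis nth_mem)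
      then show ?thesis by (rule TZ2[OF nz])
    next
      case False2: False
      have "take L (drop i xs) ! (t - i) = u" using False False2 t by simp
      moreover have "t - i < length (take L (drop i xs))" using False False2 t by auto
      ultimately have u: "u \<in> set (take L (drop i xs))" by (metis nth_mem)
      have "L \<noteq> 2" using ne False False2 by auto
      then show ?thesis using TZ3[OF un u] c by simp
    qed
  qed
  then show ?thesis by (simp add: U_def)
qed

lemma van_Out:
  assumes nz: "normalized u \<eta>" and un: "unital deg m u" and t: "xs ! t = u" "Suc t < length xs"
    and jp: "(j,p) \<in> Out (length xs)"
    and ne: "\<not> (j = 0 \<and> p = length xs - 2 \<and> t = length xs - 2)" "\<not> (j = 1 \<and> p = length xs - 2 \<and> t = 0)"
  shows "U deg m \<eta> xs j p (length xs - p) = 0"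
proof -
  let ?n = "length xs"
  let ?zs = "rot j xs"
  have c: "j < ?n" "p \<le> ?n - 1 - j" using jp by (auto simp: Out_def)
  define pos where "pos = (if j \<le> t then t - j else ?n - j + t)"
  have pz: "?zs ! pos = u" "pos < ?n"
    using t c unfolding pos_def rot_def by (auto simp: nth_append)
  have "T deg m \<eta> ?zs p (?n - p) = 0"
  proof (cases "pos < p")
    case True
    have "u \<in> set (take p ?zs)" using nth_in_take[OF True, of ?zs] pz by simp
    then show ?thesis by (rule TZ1[OF nz])
  next
    case False
    have "take (?n - p) (drop p ?zs) ! (pos - p) = u" using False pz c by simp
    moreover have "pos - p < length (take (?n - p) (drop p ?zs))" using False pz c by auto
    ultimately have u: "u \<in> set (take (?n - p) (drop p ?zs))" by (metis nth_mem)
    have "?n - p \<noteq> 2"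
    proof
      assume h: "?n - p = 2"
      then have j1: "j \<le> 1" using c by auto
      show False
      proof (cases "j = 0")
        case True
        then have "pos = t" unfolding pos_def by simp
        then show False using ne(1) True h False t by auto
      next
        case j: False
        then have j1': "j = 1" using j1 by simp
        show False
        proof (cases "t = 0")
          case True then show False using ne(2) j1' h c by auto
        next
          case False
          then have "pos = t - 1" unfolding pos_def using j1' by simp
          then show False using \<open>\<not> pos < p\<close> h t False by auto
        qed
      qed
    qed
    then show ?thesis using TZ3[OF un u] c by simp
  qed
  then show ?thesis by (simp add: U_def)
qed

lemma ins_single:
  assumes "\<And>e. e \<noteq> x \<Longrightarrow> m B e = 0"
  shows "ins m F pre B post = m B x * F (pre @ x # post)"
proof (cases "m B x = 0")
  case True
  then have "{e. m B e \<noteq> 0} = {}" using assms by (metis (mono_tags) empty_Collect_eq)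
  then show ?thesis using True by (simp add: ins_def)
next
  case False
  then have "{e. m B e \<noteq> 0} = {x}" using assms by auto
  then show ?thesis by (simp add: ins_def)
qed

lemma Tu1:
  assumes un: "unital deg m u" and i: "Suc i < length zs" "zs ! i = u"
  shows "T deg m \<eta> zs i 2 = sgnk (eps deg (take i zs)) * \<eta> (take i zs @ drop (Suc i) zs)"
proof -
  have B: "take 2 (drop i zs) = [u, zs ! Suc i]" using i
    by (metis Cons_nth_drop_Suc Suc_lessD numeral_2_eq_2 take_Suc_Cons take_eq_Nil)
  have d: "zs ! Suc i # drop (i + 2) zs = drop (Suc i) zs" using i
    by (metis Cons_nth_drop_Suc add_2_eq_Suc')
  have "ins m \<eta> (take i zs) [u, zs ! Suc i] (drop (i + 2) zs) = m [u, zs ! Suc i] (zs ! Suc i) * \<eta> (take i zs @ zs ! Suc i # drop (i + 2) zs)"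
    by (rule ins_single) (use un in \<open>simp add: unital_def\<close>)
  then show ?thesis using un unfolding T_def B d by (simp add: unital_def)
qed

lemma Tu2:
  assumes un: "unital deg m u" and i: "Suc i < length zs" "zs ! Suc i = u"
  shows "T deg m \<eta> zs i 2 = sgnk (eps deg (take i zs)) * sgnk (deg (zs ! i)) * \<eta> (take (Suc i) zs @ drop (Suc (Suc i)) zs)"
proof -
  have B: "take 2 (drop i zs) = [zs ! i, u]" using i
    by (metis Cons_nth_drop_Suc Suc_lessD numeral_2_eq_2 take_Suc_Cons take_eq_Nil)
  have d: "take i zs @ zs ! i # drop (i + 2) zs = take (Suc i) zs @ drop (Suc (Suc i)) zs" using i
    by (simp add: take_Suc_conv_app_nth)
  have "ins m \<eta> (take i zs) [zs ! i, u] (drop (i + 2) zs) = m [zs ! i, u] (zs ! i) * \<eta> (take i zs @ zs ! i # drop (i + 2) zs)"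
    by (rule ins_single) (use un in \<open>simp add: unital_def\<close>)
  then show ?thesis using un unfolding T_def B d by (simp add: unital_def mult.assoc)
qed

lemma canc1:
  fixes \<eta> :: "'b list \<Rightarrow> 'k::comm_ring_1"
  assumes un: "unital deg m u" and t: "1 \<le> t" "Suc t < length xs" "xs ! t = u"
  shows "U deg m \<eta> xs 0 (t - 1) 2 + U deg m \<eta> xs 0 t 2 = 0"
proof -
  have s: "Suc (t - 1) = t" using t by simp
  have a: "T deg m \<eta> xs (t - 1) 2 = sgnk (eps deg (take (t-1) xs)) * sgnk (deg (xs ! (t-1))) * \<eta> (take t xs @ drop (Suc t) xs)"
    using Tu2[OF un, of "t - 1" xs \<eta>] t s by simp
  have b: "T deg m \<eta> xs t 2 = sgnk (eps deg (take t xs)) * \<eta> (take t xs @ drop (Suc t) xs)"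
    using Tu1[OF un, of t xs \<eta>] t by simp
  have tk: "take t xs = take (t-1) xs @ [xs ! (t-1)]" using t s by (metis Suc_lessD less_trans_Suc lessI take_Suc_conv_app_nth)
  have sg: "sgnk (eps deg (take t xs)) = - (sgnk (eps deg (take (t-1) xs)) * sgnk (deg (xs ! (t-1))) :: 'k)"
    unfolding tk sgnk_mult sgnk_neg by (rule sgnk_cong) (simp add: sd_def even_add)
  show ?thesis unfolding U_def rot_0 rsign_0 a b sg by (simp add: algebra_simps)
qed

lemma canc2:
  fixes \<eta> :: "'b list \<Rightarrow> 'k::comm_ring_1"
  assumes un: "unital deg m u" and t: "2 \<le> length xs" "xs ! 0 = u"
  shows "U deg m \<eta> xs 0 0 2 + U deg m \<eta> xs 1 (length xs - 2) 2 = 0"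
proof -
  let ?n = "length xs"
  let ?zs = "rot 1 xs"
  have zs: "?zs = drop 1 xs @ [u]" using t by (cases xs) (auto simp: rot_def)
  have lz: "length ?zs = ?n" by simp
  have a: "T deg m \<eta> xs 0 2 = \<eta> (drop 1 xs)"
    using Tu1[OF un, of 0 xs \<eta>] t by (simp add: sgnk_def)
  have zl: "?zs ! Suc (?n - 2) = u"
  proof -
    have e: "Suc (?n - 2) = length (drop 1 xs)" using t by simp
    show ?thesis unfolding zs e by (rule nth_append_length)
  qed
  have b: "T deg m \<eta> ?zs (?n - 2) 2 = sgnk (eps deg (take (?n - 2) ?zs)) * sgnk (deg (?zs ! (?n - 2))) * \<eta> (take (Suc (?n - 2)) ?zs @ drop (Suc (Suc (?n - 2))) ?zs)"
    using Tu2[OF un, of "?n - 2" ?zs \<eta>] zl t by simp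
  have tk1: "take (Suc (?n - 2)) ?zs = drop 1 xs" using zs t by simp
  have dr: "drop (Suc (Suc (?n - 2))) ?zs = []" using t by simp
  have tk2: "drop 1 xs = take (?n - 2) ?zs @ [?zs ! (?n - 2)]"
    using tk1 t by (metis Suc_diff_Suc Suc_lessD diff_less lz numeral_2_eq_2 take_Suc_conv_app_nth zero_less_Suc less_le_trans)
  have r1: "rsign deg 1 xs = (sgnk (sd deg u * eps deg (drop 1 xs)) :: 'k)" using t
    unfolding rsign_def by (cases xs) auto
  have sdu: "sd deg u = -1" using un by (simp add: unital_def sd_def)
  have sg: "rsign deg 1 xs * (sgnk (eps deg (take (?n - 2) ?zs)) * sgnk (deg (?zs ! (?n - 2)))) = (-1 :: 'k)"
    unfolding r1 sdu tk2 sgnk_mult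
    by (simp add: sgnk_def sd_def even_add)
  have "U deg m \<eta> xs 0 0 2 + U deg m \<eta> xs 1 (?n - 2) 2
     = \<eta> (drop 1 xs) + rsign deg 1 xs * (sgnk (eps deg (take (?n - 2) ?zs)) * sgnk (deg (?zs ! (?n - 2)))) * \<eta> (drop 1 xs)"
    unfolding U_def rot_0 rsign_0 a b tk1 dr by (simp add: mult.assoc)
  also have "\<dots> = 0" unfolding sg by simp
  finally show ?thesis .
qed

lemma hoch_norm:
  fixes \<eta> :: "'b list \<Rightarrow> 'k::comm_ring_1"
  assumes nz: "normalized u \<eta>" and un: "unital deg m u" and ub: "u \<in> set (butlast xs)"
  shows "hoch_b deg m \<eta> xs = 0"
proof -
  let ?n = "length xs"
  obtain t where t0: "t < length (butlast xs)" "butlast xs ! t = u" using ub by (metis in_set_conv_nth)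
  have t: "xs ! t = u" "Suc t < ?n" using t0 by (auto simp: nth_butlast)
  define SI where "SI = {x \<in> In ?n. (1 \<le> t \<and> x = (t - 1, 2)) \<or> x = (t, 2)}"
  define SO where "SO = {x \<in> Out ?n. (t = ?n - 2 \<and> x = (0, ?n - 2)) \<or> (t = 0 \<and> x = (1, ?n - 2))}"
  have sI: "(\<Sum>(i,L)\<in>In ?n. U deg m \<eta> xs 0 i L) = (\<Sum>(i,L)\<in>SI. U deg m \<eta> xs 0 i L)"
  proof (rule sum.mono_neutral_right[OF fin_In])
    show "SI \<subseteq> In ?n" unfolding SI_def by auto
    show "\<forall>x\<in>In ?n - SI. (case x of (i, L) \<Rightarrow> U deg m \<eta> xs 0 i L) = 0"
    proof
      fix x assume x: "x \<in> In ?n - SI"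
      obtain i L where xe: "x = (i, L)" by (cases x)
      have "U deg m \<eta> xs 0 i L = 0"
        by (rule van_In[OF nz un t]) (use x xe in \<open>auto simp: SI_def\<close>)
      then show "(case x of (i, L) \<Rightarrow> U deg m \<eta> xs 0 i L) = 0" using xe by simp
    qed
  qed
  have sO: "(\<Sum>(j,p)\<in>Out ?n. U deg m \<eta> xs j p (?n - p)) = (\<Sum>(j,p)\<in>SO. U deg m \<eta> xs j p (?n - p))"
  proof (rule sum.mono_neutral_right[OF fin_Out])
    show "SO \<subseteq> Out ?n" unfolding SO_def by auto
    show "\<forall>x\<in>Out ?n - SO. (case x of (j, p) \<Rightarrow> U deg m \<eta> xs j p (?n - p)) = 0"
    proof
      fix x assume x: "x \<in> Out ?n - SO"
      obtain j p where xe: "x = (j, p)" by (cases x)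
      have "U deg m \<eta> xs j p (?n - p) = 0"
        by (rule van_Out[OF nz un t]) (use x xe in \<open>auto simp: SO_def\<close>)
      then show "(case x of (j, p) \<Rightarrow> U deg m \<eta> xs j p (?n - p)) = 0" using xe by simp
    qed
  qed
  have main: "(\<Sum>(i,L)\<in>SI. U deg m \<eta> xs 0 i L) + (\<Sum>(j,p)\<in>SO. U deg m \<eta> xs j p (?n - p)) = 0"
  proof (cases "1 \<le> t")
    case True
    show ?thesis
    proof (cases "t + 3 \<le> ?n")
      case True2: True
      have e1: "SI = {(t - 1, 2), (t, 2)}" unfolding SI_def using True True2 by (auto simp: In_def)
      have e2: "SO = {}" unfolding SO_def using True True2 by auto
      have ne: "(t - 1, 2) \<noteq> (t, 2::nat)" using True by simp
      show ?thesis unfolding e1 e2 using ne canc1[OF un True t(2) t(1), of \<eta>] by simp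
    next
      case False
      then have tn: "t = ?n - 2" using t by simp
      have e1: "SI = {(t - 1, 2)}" unfolding SI_def using True False t by (auto simp: In_def)
      have e2: "SO = {(0, ?n - 2)}" unfolding SO_def using True tn t by (auto simp: Out_def)
      have e3: "?n - (?n - 2) = 2" using t by simp
      show ?thesis unfolding e1 e2 using canc1[OF un True t(2) t(1), of \<eta>] tn e3 by simp
    qed
  next
    case False
    then have t0: "t = 0" by simp
    show ?thesis
    proof (cases "3 \<le> ?n")
      case True
      have e1: "SI = {(0, 2)}" unfolding SI_def using t0 True by (auto simp: In_def)
      have e2: "SO = {(1, ?n - 2)}" unfolding SO_def using t0 True by (auto simp: Out_def)
      have e3: "?n - (?n - 2) = 2" using t by simp
      show ?thesis unfolding e1 e2 using canc2[OF un, of xs \<eta>] t t0 e3 by simp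
    next
      case False
      then have n2: "?n = 2" using t by simp
      have e1: "SI = {}" unfolding SI_def using t0 n2 by (auto simp: In_def)
      have e2: "SO = {(0, 0), (1, 0)}" unfolding SO_def using t0 n2 by (auto simp: Out_def)
      show ?thesis unfolding e1 e2 using canc2[OF un, of xs \<eta>] t t0 n2 by simp
    qed
  qed
  show ?thesis unfolding hoch_U sI sO by (rule main)
qed

lemma set_rot[simp]: "set (rot j xs) = set xs"
  unfolding rot_def by (metis append_take_drop_id set_append sup_commute)

lemma conn_zero:
  assumes "normalized u \<eta>" "u \<in> set xs"
  shows "conn_B deg u \<eta> xs = 0"
  unfolding conn_B_def
proof (rule sum.neutral, intro ballI)
  fix j
  have "u \<in> set (butlast (rot j xs @ [u]))" using assms(2) by simp
  then have "\<eta> (rot j xs @ [u]) = 0" using assms(1) by (simp add: normalized_def)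
  then show "rsign deg j xs * \<eta> (rot j xs @ [u]) = 0" by simp
qed

lemma rot_fr:
  assumes "Suc k \<le> length xs" "j < length xs"
  shows "rot j (rot (Suc k) xs) = rot (fr (length xs) k j) xs \<and> rsign deg (Suc k) xs * rsign deg j (rot (Suc k) xs) = (rsign deg (fr (length xs) k j) xs :: 'k::comm_ring_1)"
proof (cases "Suc k + j < length xs")
  case True
  then show ?thesis using rot_add[of "Suc k" j xs deg] unfolding fr_def by simp
next
  case False
  then show ?thesis using rot_add2[of "Suc k" xs j deg] assms unfolding fr_def by simp
qed

lemma conn_rot:
  fixes \<eta> :: "'b list \<Rightarrow> 'k::comm_ring_1"
  assumes kn: "Suc (Suc k) \<le> length xs"
  shows "rsign deg (Suc k) xs * conn_B deg u \<eta> (rot (Suc k) xs) = conn_B deg u \<eta> xs"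
proof -
  let ?n = "length xs"
  have 1: "rsign deg (Suc k) xs * conn_B deg u \<eta> (rot (Suc k) xs) = (\<Sum>j<?n. rsign deg (fr ?n k j) xs * \<eta> (rot (fr ?n k j) xs @ [u]))"
    unfolding conn_B_def length_rot sum_distrib_left
  proof (rule sum.cong[OF refl])
    fix j assume "j \<in> {..<?n}"
    then have r: "rot j (rot (Suc k) xs) = rot (fr ?n k j) xs \<and> rsign deg (Suc k) xs * rsign deg j (rot (Suc k) xs) = (rsign deg (fr ?n k j) xs :: 'k)"
      using rot_fr[of k xs j deg] kn by simp
    show "rsign deg (Suc k) xs * (rsign deg j (rot (Suc k) xs) * \<eta> (rot j (rot (Suc k) xs) @ [u])) =
         rsign deg (fr ?n k j) xs * \<eta> (rot (fr ?n k j) xs @ [u])"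
      using r by (simp add: mult.assoc[symmetric])
  qed
  have b: "bij_betw (fr ?n k) {..<?n} {..<?n}"
    by (rule bij_betw_byWitness[where f'="\<lambda>a. if k < a then a - Suc k else a + ?n - Suc k"])
      (use kn in \<open>auto simp: fr_def\<close>)
  have 2: "(\<Sum>j<?n. rsign deg (fr ?n k j) xs * \<eta> (rot (fr ?n k j) xs @ [u])) = (\<Sum>a<?n. rsign deg a xs * \<eta> (rot a xs @ [u]))"
    using sum.reindex_bij_betw[OF b, of "\<lambda>a. rsign deg a xs * \<eta> (rot a xs @ [u])"] by simp
  show ?thesis unfolding 1 2 unfolding conn_B_def ..
qed

lemma hoch_conn:
  fixes \<phi> :: "nat \<Rightarrow> 'b list \<Rightarrow> 'k::comm_ring_1"
  assumes un: "unital deg m u" and nc: "neg_cyclic_cocycle deg m u \<phi>" and ne: "xs \<noteq> []"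
  shows "hoch_b deg m (\<phi> 0) xs = conn_B deg u (\<phi> 1) xs"
proof (cases "u \<in> set (butlast xs)")
  case True
  have nz0: "normalized u (\<phi> 0)" and nz1: "normalized u (\<phi> 1)" using nc by (auto simp: neg_cyclic_cocycle_def)
  have "u \<in> set xs" using True by (meson in_set_butlastD)
  then show ?thesis using hoch_norm[OF nz0 un True] conn_zero[OF nz1] by simp
next
  case False
  then show ?thesis using nc ne unfolding neg_cyclic_cocycle_def by (metis One_nat_def)
qed

theorem proposition6p1:
  fixes deg :: "'b \<Rightarrow> int"
    and m :: "'b list \<Rightarrow> 'b \<Rightarrow> 'k::field_char_0"
    and u :: 'b
    and \<phi> :: "nat \<Rightarrow> 'b list \<Rightarrow> 'k"
  assumes "ainf_alg deg m"
    and "unital deg m u"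
    and "neg_cyclic_cocycle deg m u \<phi>"
  shows "bimod_map deg m (phi_tilde deg (\<phi> 0))
       \<and> skew_sym deg (phi_tilde deg (\<phi> 0))
       \<and> closed_ip deg (phi_tilde deg (\<phi> 0))"
proof (intro conjI)
  show "skew_sym deg (phi_tilde deg (\<phi> 0))" by (rule skew)
  show "closed_ip deg (phi_tilde deg (\<phi> 0))" by (rule closed)
  show "bimod_map deg m (phi_tilde deg (\<phi> 0))"
    unfolding bimod_map_def
  proof (intro allI impI)
    fix k xs assume kn: "Suc (Suc k) \<le> length (xs :: 'b list)"
    have ne: "xs \<noteq> []" "rot (Suc k) xs \<noteq> []" using kn length_rot[of "Suc k" xs] by (auto simp del: length_rot)
    have "hoch_b deg m (\<phi> 0) xs - rsign deg (Suc k) xs * hoch_b deg m (\<phi> 0) (rot (Suc k) xs) = 0"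
      unfolding hoch_conn[OF assms(2,3) ne(1)] hoch_conn[OF assms(2,3) ne(2)] conn_rot[OF kn] by simp
    then show "(\<Sum>i<length xs. \<Sum>L\<in>{1..length xs - 1 - i}.
         sgnk (eps deg (take i xs)) *
         ins m (phi_tilde deg (\<phi> 0) (if i \<le> k \<and> k < i + L then i else if i + L \<le> k then k + 1 - L else k))
           (take i xs) (take L (drop i xs)) (drop (i + L) xs))
      = (\<Sum>i\<le>k. \<Sum>L\<in>{k + 1 - i..length xs - 1 - i}.
         - (rsign deg i xs * sgnk (eps deg (take L (drop i xs)))) *
         ins m (phi_tilde deg (\<phi> 0) (k - i)) (take L (drop i xs)) (drop (i + L) xs @ take i xs) [])"
      using main_id[OF assms(1) kn, of "\<phi> 0"] by simp
  qed
qed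

end
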